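(* Let $D=2$, $C/2<K<C$, $U=rC$ and $\bar a=rK$ for some positive integer $r$, and let all user and creator types be drawn i.i.d. from the uniform distribution on $\{x\in\mathbb R^2_{\ge0}:\|x\|_2=1\}$. Write creator types as $c_i=(\cos(X_i\pi/2),\sin(X_i\pi/2))$ with $X_1\le\dots\le X_C$, define $R_1=\left[0,\frac{X_1+X_{K+1}}2\right]$, $R_i=\left(\frac{X_{i-1}+X_{i+K-1}}2,\frac{X_i+X_{i+K}}2\right]$ for $2\le i\le C-K$, $R_{C-K+1}=\left(\frac{X_{C-K}+X_C}2,1\right]$, and let $U_i$ be the number of users whose type $(\cos(y\pi/2),\sin(y\pi/2))$ has $y\in R_i$. Then $$\Pr(\text{at least }K\text{ creators stay after }t=0\text{ under }UC_0)=\sum_{i=1}^{C-K+1}\Pr\left(\frac{\sum_{j=1}^iU_j}{rC}\ge\frac KC\ \text{and}\ \frac{\sum_{j=i}^{C-K+1}U_j}{rC}\ge\frac KC\right).$$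
   Context: Users $\mathcal U_0=\{1,\dots,U\}$, creators $\mathcal C_0=\{1,\dots,C\}$. At $t=0$ the user-centric recommendation assigns each user $i$ the set $UC_0(i)\in\arg\max_{S\subseteq\mathcal C_0,|S|\le K}\sum_{j\in S}u_i^Tc_j$. Creator $j$ stays after $t=0$ if $|\{i\in\mathcal U_0:j\in UC_0(i)\}|\ge\bar a$. *)

theory Defs
  imports "HOL-Probability.Probability"
begin

(* Types in dimension D = 2: the nonnegative quarter of the unit circle,
  parametrised by the angle parameter y in [0,1] as (cos(y pi/2), sin(y pi/2)).
  The uniform distribution on the arc is the image of the uniform distribution
  of y on [0,1]. *)

definition ctype :: "real \<Rightarrow> real \<times> real" where
  "ctype y = (cos (y * pi / 2), sin (y * pi / 2))"

definition ip :: "real \<times> real \<Rightarrow> real \<times> real \<Rightarrow> real" where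
  "ip a b = fst a * fst b + snd a * snd b"

definition unif01 :: "real measure" where
  "unif01 = uniform_measure lborel {0..1}"

definition model :: "nat \<Rightarrow> nat \<Rightarrow> ((nat \<Rightarrow> real) \<times> (nat \<Rightarrow> real)) measure" where
  "model U C = (PiM {..<U} (\<lambda>_. unif01)) \<Otimes>\<^sub>M (PiM {..<C} (\<lambda>_. unif01))"

definition is_UC0 :: "nat \<Rightarrow> nat \<Rightarrow> nat \<Rightarrow> (nat \<Rightarrow> real) \<Rightarrow> (nat \<Rightarrow> real)
    \<Rightarrow> (nat \<Rightarrow> nat set) \<Rightarrow> bool" where
  "is_UC0 U C K y x S \<longleftrightarrow>
     (\<forall>i<U. S i \<subseteq> {..<C} \<and> card (S i) \<le> K \<and>
        (\<forall>T. T \<subseteq> {..<C} \<longrightarrow> card T \<le> K \<longrightarrow>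
           (\<Sum>j\<in>T. ip (ctype (y i)) (ctype (x j))) \<le> (\<Sum>j\<in>S i. ip (ctype (y i)) (ctype (x j)))))"

definition num_stay :: "nat \<Rightarrow> nat \<Rightarrow> nat \<Rightarrow> (nat \<Rightarrow> nat set) \<Rightarrow> nat" where
  "num_stay U C abar S = card {j\<in>{..<C}. abar \<le> card {i\<in>{..<U}. j \<in> S i}}"

definition ordstat :: "nat \<Rightarrow> (nat \<Rightarrow> real) \<Rightarrow> nat \<Rightarrow> real" where
  "ordstat C x k = sort (map x [0..<C]) ! (k - 1)"

definition region :: "nat \<Rightarrow> nat \<Rightarrow> (nat \<Rightarrow> real) \<Rightarrow> nat \<Rightarrow> real set" where
  "region C K X i =
     (if i = 1 then {0 .. (X 1 + X (K + 1)) / 2}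
      else if i = C - K + 1 then {(X (C - K) + X C) / 2 <.. 1}
      else {(X (i - 1) + X (i + K - 1)) / 2 <.. (X i + X (i + K)) / 2})"

definition Ucount :: "nat \<Rightarrow> nat \<Rightarrow> nat \<Rightarrow> (nat \<Rightarrow> real) \<Rightarrow> (nat \<Rightarrow> real) \<Rightarrow> nat \<Rightarrow> nat" where
  "Ucount U C K y x i = card {l\<in>{..<U}. y l \<in> region C K (ordstat C x) i}"

end

theory Submission
  imports Defs
begin

lemma window_opt:
  fixes w :: "nat \<Rightarrow> real"
  assumes J: "finite J" and WJ: "W \<subseteq> J" and cW: "card W = K"
    and nn: "\<forall>j\<in>J. 0 \<le> w j" and pos: "\<forall>b\<in>W. 0 < w b"
    and sep: "\<forall>a\<in>J-W. \<forall>b\<in>W. w a < w b"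
    and TJ: "T \<subseteq> J" and cT: "card T \<le> K" and TW: "T \<noteq> W"
  shows "sum w T < sum w W"
proof -
  define \<theta> where "\<theta> = (if J - W = {} then 0 else Max (w ` (J - W)))"
  have fW: "finite W" "finite T" using J WJ TJ finite_subset by auto
  have th0: "0 \<le> \<theta>"
  proof (cases "J - W = {}")
    case False
    then obtain a where "a \<in> J - W" by auto
    then have "w a \<le> Max (w ` (J - W))" using J by (intro Max_ge) auto
    moreover have "0 \<le> w a" using nn \<open>a \<in> J - W\<close> by auto
    ultimately show ?thesis using False by (simp add: \<theta>_def)
  qed (simp add: \<theta>_def)
  have le: "w a \<le> \<theta>" if "a \<in> J - W" for a
    using that J by (auto simp: \<theta>_def intro!: Max_ge)
  have gt: "\<theta> < w b" if "b \<in> W" for b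
  proof (cases "J - W = {}")
    case True then show ?thesis using pos that by (simp add: \<theta>_def)
  next
    case False
    have "Max (w ` (J - W)) \<in> w ` (J - W)" using False J by (intro Max_in) auto
    then obtain a where "a \<in> J - W" "Max (w ` (J - W)) = w a" by auto
    then show ?thesis using sep that False by (simp add: \<theta>_def)
  qed
  have WT: "W - T \<noteq> {}"
  proof
    assume "W - T = {}"
    then have "W \<subseteq> T" by auto
    then have "W = T" using cT cW fW by (intro card_seteq) auto
    then show False using TW by simp
  qed
  have cards: "card (T - W) \<le> card (W - T)"
  proof -
    have "card T = card (T \<inter> W) + card (T - W)"
      using fW by (intro card_Int_Diff)
    moreover have "card W = card (W \<inter> T) + card (W - T)"
      using fW by (intro card_Int_Diff)
    ultimately show ?thesis using cT cW by (simp add: Int_commute)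
  qed
  have s1: "sum w T = sum w (T \<inter> W) + sum w (T - W)"
    using fW by (intro sum.Int_Diff)
  have s2: "sum w W = sum w (T \<inter> W) + sum w (W - T)"
    using sum.Int_Diff[OF fW(1), of w T] by (simp add: Int_commute)
  have "sum w (T - W) \<le> of_nat (card (T - W)) * \<theta>"
    using le TJ by (intro sum_bounded_above) auto
  also have "\<dots> \<le> of_nat (card (W - T)) * \<theta>"
    using cards th0 by (intro mult_right_mono) auto
  also have "\<dots> < sum w (W - T)"
  proof -
    have "0 < sum (\<lambda>b. w b - \<theta>) (W - T)"
      using WT fW gt by (intro sum_pos) auto
    then show ?thesis by (simp add: sum_subtractf)
  qed
  finally show ?thesis using s1 s2 by simp
qed

lemma ip_ctype: "ip (ctype y) (ctype x) = cos (\<bar>y - x\<bar> * pi / 2)"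
proof -
  have "ip (ctype y) (ctype x) = cos (y * pi / 2 - x * pi / 2)"
    by (simp add: ip_def ctype_def cos_diff)
  also have "y * pi / 2 - x * pi / 2 = (y - x) * pi / 2" by (simp add: algebra_simps)
  also have "cos ((y - x) * pi / 2) = cos (\<bar>y - x\<bar> * pi / 2)"
  proof (cases "0 \<le> y - x")
    case False
    then have "\<bar>y - x\<bar> = - (y - x)" by simp
    then have "\<bar>y - x\<bar> * pi / 2 = - ((y - x) * pi / 2)" by (simp only: mult_minus_left minus_divide_left)
    then show ?thesis by (simp only: cos_minus)
  qed simp
  finally show ?thesis .
qed

lemma ip_pos: "\<bar>y - x\<bar> < 1 \<Longrightarrow> 0 < ip (ctype y) (ctype x)"
  unfolding ip_ctype
proof (rule cos_gt_zero_pi)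
  assume "\<bar>y - x\<bar> < 1"
  then have "\<bar>y - x\<bar> * pi < 1 * pi" by (intro mult_strict_right_mono) auto
  then show "\<bar>y - x\<bar> * pi / 2 < pi / 2" by simp
  have "0 \<le> \<bar>y - x\<bar> * pi / 2" by simp
  then show "- (pi / 2) < \<bar>y - x\<bar> * pi / 2" using pi_gt_zero by linarith
qed

lemma ip_less: "\<bar>y - b\<bar> < \<bar>y - a\<bar> \<Longrightarrow> \<bar>y - a\<bar> \<le> 1 \<Longrightarrow> ip (ctype y) (ctype a) < ip (ctype y) (ctype b)"
  unfolding ip_ctype
proof (rule cos_monotone_0_pi)
  assume h: "\<bar>y - b\<bar> < \<bar>y - a\<bar>" "\<bar>y - a\<bar> \<le> 1"
  show "0 \<le> \<bar>y - b\<bar> * pi / 2" by simp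
  show "\<bar>y - b\<bar> * pi / 2 < \<bar>y - a\<bar> * pi / 2" using h by (intro divide_strict_right_mono mult_strict_right_mono) auto
  have "\<bar>y - a\<bar> * pi \<le> 1 * pi" using h by (intro mult_right_mono) auto
  then show "\<bar>y - a\<bar> * pi / 2 \<le> pi" by simp
qed

lemma ordstat_len: "length (sort (map x [0..<C])) = C" by simp

lemma ordstat_mono:
  assumes "1 \<le> k" "k \<le> k'" "k' \<le> C"
  shows "ordstat C x k \<le> ordstat C x k'"
proof -
  have "sorted (sort (map x [0..<C]))" by simp
  then show ?thesis unfolding ordstat_def using assms
    by (subst (asm) sorted_iff_nth_mono) auto
qed

lemma ordstat_strict:
  assumes "\<forall>j<C. \<forall>j'<C. j \<noteq> j' \<longrightarrow> x j \<noteq> x j'"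
    and "1 \<le> k" "k < k'" "k' \<le> C"
  shows "ordstat C x k < ordstat C x k'"
proof -
  have "distinct (map x [0..<C])"
  proof -
    have "inj_on x {..<C}" using assms(1) unfolding inj_on_def by (meson lessThan_iff)
    then show ?thesis by (simp add: distinct_map atLeast_upt)
  qed
  then have "sorted_wrt (<) (sort (map x [0..<C]))"
    by (simp add: strict_sorted_iff)
  then show ?thesis unfolding ordstat_def using assms
    by (intro sorted_wrt_nth_less[where P="(<)"]) auto
qed

lemma ordstat_image: "ordstat C x ` {1..C} = x ` {..<C}"
proof -
  let ?s = "sort (map x [0..<C])"
  have "ordstat C x ` {1..C} = (\<lambda>i. ?s ! i) ` {..<C}"
  proof (rule set_eqI, rule iffI)
    fix v assume "v \<in> ordstat C x ` {1..C}"
    then obtain k where "k \<in> {1..C}" "v = ?s ! (k - 1)" by (auto simp: ordstat_def)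
    then show "v \<in> (\<lambda>i. ?s ! i) ` {..<C}" by force
  next
    fix v assume "v \<in> (\<lambda>i. ?s ! i) ` {..<C}"
    then obtain i where "i < C" "v = ?s ! i" by auto
    then have "Suc i \<in> {1..C}" "v = ordstat C x (Suc i)" by (auto simp: ordstat_def)
    then show "v \<in> ordstat C x ` {1..C}" by blast
  qed
  also have "\<dots> = set ?s" by (auto simp: set_conv_nth)
  also have "\<dots> = x ` {..<C}" by auto
  finally show ?thesis .
qed

lemma ordstat_le_iff:
  assumes "1 \<le> k" "k \<le> C"
  shows "ordstat C x k \<le> t \<longleftrightarrow> k \<le> card {j\<in>{..<C}. x j \<le> t}"
proof -
  let ?xs = "map x [0..<C]"
  let ?s = "sort ?xs"
  let ?A = "{i\<in>{..<C}. ?s ! i \<le> t}"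
  have "card ?A = length (filter (\<lambda>v. v \<le> t) ?s)"
    by (simp add: length_filter_conv_card)
  also have "\<dots> = length (filter (\<lambda>v. v \<le> t) ?xs)"
    by (metis mset_filter mset_sort size_mset)
  also have "\<dots> = card {j\<in>{..<C}. x j \<le> t}"
    by (simp add: length_filter_conv_card) (intro arg_cong[where f=card], auto)
  finally have cA: "card ?A = card {j\<in>{..<C}. x j \<le> t}" .
  have srt: "\<And>i i'. i \<le> i' \<Longrightarrow> i' < C \<Longrightarrow> ?s ! i \<le> ?s ! i'"
    using sorted_sort[of ?xs] by (subst (asm) sorted_iff_nth_mono) auto
  show ?thesis
  proof
    assume h: "ordstat C x k \<le> t"
    have "{..<k} \<subseteq> ?A"
    proof
      fix i assume "i \<in> {..<k}"
      then have "?s ! i \<le> ?s ! (k - 1)" using assms by (intro srt) auto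
      then show "i \<in> ?A" using h assms \<open>i \<in> {..<k}\<close> by (auto simp: ordstat_def)
    qed
    then have "card {..<k} \<le> card ?A" by (intro card_mono) auto
    then show "k \<le> card {j\<in>{..<C}. x j \<le> t}" using cA by simp
  next
    assume h: "k \<le> card {j\<in>{..<C}. x j \<le> t}"
    show "ordstat C x k \<le> t"
    proof (rule ccontr)
      assume "\<not> ordstat C x k \<le> t"
      then have gt: "t < ?s ! (k - 1)" by (simp add: ordstat_def)
      have "?A \<subseteq> {..<k - 1}"
      proof
        fix i assume i: "i \<in> ?A"
        show "i \<in> {..<k - 1}"
        proof (rule ccontr)
          assume "i \<notin> {..<k - 1}"
          then have "?s ! (k - 1) \<le> ?s ! i" using i by (intro srt) auto
          then show False using i gt by auto
        qed
      qed
      then have "card ?A \<le> k - 1" by (metis card_lessThan card_mono finite_lessThan)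
      then show False using h cA assms by simp
    qed
  qed
qed

definition bnd :: "nat \<Rightarrow> (nat \<Rightarrow> real) \<Rightarrow> nat \<Rightarrow> real" where
  "bnd K X k = (X (k - 1) + X (k + K - 1)) / 2"

lemma region_in:
  assumes KC: "K < C" and i: "i \<in> {1..C-K+1}" and y: "y \<in> region C K X i"
  shows "(i = 1 \<or> bnd K X i < y) \<and> (i = C-K+1 \<or> y \<le> bnd K X (i+1))"
proof -
  consider "i = 1" | "i = C-K+1" | "i \<noteq> 1" "i \<noteq> C-K+1" by blast
  then show ?thesis
  proof cases
    case 1
    have "bnd K X (i+1) = (X 1 + X (K+1)) / 2" using 1 by (simp add: bnd_def add.commute)
    then show ?thesis using 1 y by (simp add: region_def)
  next
    case 2
    have "i \<noteq> 1" using KC 2 by simp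
    moreover have "bnd K X i = (X (C - K) + X C) / 2" using 2 KC by (simp add: bnd_def)
    ultimately show ?thesis using 2 y by (simp add: region_def)
  next
    case 3
    have "bnd K X i = (X (i - 1) + X (i + K - 1)) / 2" by (simp add: bnd_def)
    moreover have "bnd K X (i+1) = (X i + X (i + K)) / 2" by (simp add: bnd_def)
    ultimately show ?thesis using 3 y by (simp add: region_def)
  qed
qed

lemma region_out:
  assumes KC: "K < C" and i: "i \<in> {1..C-K+1}" and y: "y \<in> {0..1}"
    and h: "(i = 1 \<or> bnd K X i < y) \<and> (i = C-K+1 \<or> y \<le> bnd K X (i+1))"
  shows "y \<in> region C K X i"
proof -
  consider "i = 1" | "i = C-K+1" | "i \<noteq> 1" "i \<noteq> C-K+1" by blast
  then show ?thesis
  proof cases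
    case 1
    have "bnd K X (i+1) = (X 1 + X (K+1)) / 2" using 1 by (simp add: bnd_def add.commute)
    then show ?thesis using 1 y h KC by (simp add: region_def)
  next
    case 2
    have "i \<noteq> 1" using KC 2 by simp
    moreover have "bnd K X i = (X (C - K) + X C) / 2" using 2 KC by (simp add: bnd_def)
    ultimately show ?thesis using 2 y h by (simp add: region_def)
  next
    case 3
    have "bnd K X i = (X (i - 1) + X (i + K - 1)) / 2" by (simp add: bnd_def)
    moreover have "bnd K X (i+1) = (X i + X (i + K)) / 2" by (simp add: bnd_def)
    ultimately show ?thesis using 3 h by (simp add: region_def)
  qed
qed

lemma bnd_mono:
  assumes mono: "\<And>k k'. 1 \<le> k \<Longrightarrow> k \<le> k' \<Longrightarrow> k' \<le> C \<Longrightarrow> X k \<le> X k'"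
    and KC: "K < C" and k: "2 \<le> k" "k \<le> k'" "k' \<le> C-K+1"
  shows "bnd K X k \<le> bnd K X k'"
proof -
  have "X (k - 1) \<le> X (k' - 1)" using k KC by (intro mono) auto
  moreover have "X (k + K - 1) \<le> X (k' + K - 1)" using k KC by (intro mono) auto
  ultimately show ?thesis by (simp add: bnd_def)
qed

lemma region_unique:
  assumes mono: "\<And>k k'. 1 \<le> k \<Longrightarrow> k \<le> k' \<Longrightarrow> k' \<le> C \<Longrightarrow> X k \<le> X k'"
    and KC: "K < C" and i: "i \<in> {1..C-K+1}" "i' \<in> {1..C-K+1}"
    and y: "y \<in> region C K X i" "y \<in> region C K X i'"
  shows "i = i'"
proof (rule ccontr)
  assume "i \<noteq> i'"
  then consider "i < i'" | "i' < i" by linarith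
  then show False
  proof cases
    case 1
    have a: "y \<le> bnd K X (i+1)" using region_in[OF KC i(1) y(1)] 1 i by auto
    have b: "bnd K X i' < y" using region_in[OF KC i(2) y(2)] 1 i by auto
    have "bnd K X (i+1) \<le> bnd K X i'" using 1 i by (intro bnd_mono[OF mono KC]) auto
    then show False using a b by simp
  next
    case 2
    have a: "y \<le> bnd K X (i'+1)" using region_in[OF KC i(2) y(2)] 2 i by auto
    have b: "bnd K X i < y" using region_in[OF KC i(1) y(1)] 2 i by auto
    have "bnd K X (i'+1) \<le> bnd K X i" using 2 i by (intro bnd_mono[OF mono KC]) auto
    then show False using a b by simp
  qed
qed

lemma region_exists:
  assumes KC: "K < C" and y: "y \<in> {0..1}"
  shows "\<exists>i\<in>{1..C-K+1}. y \<in> region C K X i"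
proof -
  let ?A = "{k\<in>{1..C-K+1}. k = 1 \<or> bnd K X k < y}"
  define i where "i = Max ?A"
  have fin: "finite ?A" by simp
  have ne: "1 \<in> ?A" by simp
  have iA: "i \<in> ?A" unfolding i_def using fin ne by (intro Max_in) auto
  have imax: "k \<le> i" if "k \<in> ?A" for k unfolding i_def using fin that by (rule Max_ge)
  have "i = C-K+1 \<or> y \<le> bnd K X (i+1)"
  proof (rule ccontr)
    assume "\<not> ?thesis"
    then have "i + 1 \<in> ?A" using iA by auto
    then show False using imax[of "i+1"] by simp
  qed
  then show ?thesis using iA by (intro bexI[of _ i] region_out[OF KC _ y]) auto
qed

lemma stay_comb:
  fixes \<iota> :: "nat \<Rightarrow> nat" and U C K r :: nat
  assumes \<iota>: "\<forall>l<U. \<iota> l \<in> {1..C-K+1}" and KC: "K < C" "C < 2*K" and r: "0 < r" and U: "U = r*C"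
  defines "cntP \<equiv> \<lambda>i. card {l\<in>{..<U}. \<iota> l \<le> i}"
      and "cntS \<equiv> \<lambda>i. card {l\<in>{..<U}. i \<le> \<iota> l}"
      and "cnt \<equiv> \<lambda>p. card {l\<in>{..<U}. \<iota> l \<le> p \<and> p \<le> \<iota> l + K - 1}"
  shows "K \<le> card {p\<in>{1..C}. r*K \<le> cnt p} \<longleftrightarrow> (\<exists>i\<in>{1..C-K+1}. r*K \<le> cntP i \<and> r*K \<le> cntS i)"
proof -
  let ?m = "C - K + 1"
  have f1: "cnt p = cntP p" if "p \<le> K" for p
    unfolding cnt_def cntP_def using \<iota> that by (intro arg_cong[where f=card]) force
  have f2: "cnt p = cntS (p - K + 1)" if "K < p" for p
    unfolding cnt_def cntS_def using \<iota> that KC by (intro arg_cong[where f=card]) force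
  have f3: "cntP i \<le> cntP i'" if "i \<le> i'" for i i'
    unfolding cntP_def using that by (intro card_mono) auto
  have f3': "cntS i' \<le> cntS i" if "i \<le> i'" for i i'
    unfolding cntS_def using that by (intro card_mono) auto
  have f4: "cntP i + cntS (i+1) = U" for i
  proof -
    have "{l\<in>{..<U}. \<iota> l \<le> i} \<union> {l\<in>{..<U}. i + 1 \<le> \<iota> l} = {..<U}" by auto
    moreover have "card ({l\<in>{..<U}. \<iota> l \<le> i} \<union> {l\<in>{..<U}. i + 1 \<le> \<iota> l}) = cntP i + cntS (i+1)"
      unfolding cntP_def cntS_def by (intro card_Un_disjoint) auto
    ultimately show ?thesis by simp
  qed
  have f5: "cntS 1 = U"
    unfolding cntS_def using \<iota> by (subst arg_cong[where f=card and y="{..<U}"]) auto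
  have f6: "cntP ?m = U"
    unfolding cntP_def using \<iota> by (subst arg_cong[where f=card and y="{..<U}"]) auto
  have f7: "cntP 0 = 0"
    unfolding cntP_def using \<iota> by (subst arg_cong[where f=card and y="{}"]) auto
  have rK: "r * K \<le> U" "0 < r * K" using U KC r by auto
  show ?thesis
  proof
    assume "\<exists>i\<in>{1..?m}. r*K \<le> cntP i \<and> r*K \<le> cntS i"
    then obtain i where i: "i \<in> {1..?m}" "r*K \<le> cntP i" "r*K \<le> cntS i" by blast
    have "{i..K+i-1} \<subseteq> {p\<in>{1..C}. r*K \<le> cnt p}"
    proof
      fix p assume p: "p \<in> {i..K+i-1}"
      have "r*K \<le> cnt p"
      proof (cases "p \<le> K")
        case True then show ?thesis using f1 f3[of i p] i p by auto
      next
        case False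
        have "p \<le> K + i - 1" "1 \<le> i" using p i by auto
        then have "p - K + 1 \<le> i" using False by arith
        then have "cntS i \<le> cntS (p - K + 1)" by (rule f3')
        moreover have "cnt p = cntS (p - K + 1)" using False by (intro f2) simp
        ultimately show ?thesis using i(3) by linarith
      qed
      then show "p \<in> {p\<in>{1..C}. r*K \<le> cnt p}" using p i KC by auto
    qed
    then have "card {i..K+i-1} \<le> card {p\<in>{1..C}. r*K \<le> cnt p}" by (intro card_mono) auto
    then show "K \<le> card {p\<in>{1..C}. r*K \<le> cnt p}" using i KC by simp
  next
    assume St: "K \<le> card {p\<in>{1..C}. r*K \<le> cnt p}"
    show "\<exists>i\<in>{1..?m}. r*K \<le> cntP i \<and> r*K \<le> cntS i"
    proof (rule ccontr)
      assume no: "\<not> ?thesis"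
      define a where "a = (LEAST i. r*K \<le> cntP i)"
      have Pm: "r*K \<le> cntP ?m" using f6 rK by simp
      have a1: "r*K \<le> cntP a" unfolding a_def using Pm by (rule LeastI)
      have a2: "a \<le> ?m" unfolding a_def using Pm by (rule Least_le)
      have a3: "a \<noteq> 0"
      proof
        assume "a = 0" then show False using a1 f7 rK by simp
      qed
      have a4: "a \<le> p" if "r*K \<le> cntP p" for p unfolding a_def using that by (rule Least_le)
      have "a \<in> {1..?m}" using a2 a3 by simp
      then have Sa: "cntS a < r*K" using no a1 by (meson not_le)
      have a5: "a \<noteq> 1"
      proof
        assume "a = 1" then show False using Sa f5 rK by simp
      qed
      have "{p\<in>{1..C}. r*K \<le> cnt p} \<subseteq> {a..K+a-2}"
      proof
        fix p assume p: "p \<in> {p\<in>{1..C}. r*K \<le> cnt p}"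
        show "p \<in> {a..K+a-2}"
        proof (cases "p \<le> K")
          case True
          then have "a \<le> p" using p f1 a4 by auto
          moreover have "p \<le> K + a - 2" using True a3 a5 by arith
          ultimately show ?thesis by simp
        next
          case False
          then have h: "r*K \<le> cntS (p - K + 1)" using p f2 by auto
          have "p - K + 1 < a"
          proof (rule ccontr)
            assume "\<not> p - K + 1 < a"
            then have "cntS (p - K + 1) \<le> cntS a" by (intro f3') auto
            then show False using h Sa by auto
          qed
          then have "p \<le> K + a - 2" by arith
          moreover have "a \<le> p" using False a2 KC by arith
          ultimately show ?thesis by simp
        qed
      qed
      then have "card {p\<in>{1..C}. r*K \<le> cnt p} \<le> card {a..K+a-2}" by (intro card_mono) auto
      also have "\<dots> = K + a - 2 + 1 - a" by simp
      also have "\<dots> = K - 1" using a3 a5 KC by arith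
      finally show False using St KC by arith
    qed
  qed
qed

definition good :: "nat \<Rightarrow> nat \<Rightarrow> (nat \<Rightarrow> real) \<Rightarrow> (nat \<Rightarrow> real) \<Rightarrow> bool" where
  "good U C y x \<longleftrightarrow> (\<forall>j<C. x j \<in> {0..1}) \<and> (\<forall>j<C. \<forall>j'<C. j \<noteq> j' \<longrightarrow> x j \<noteq> x j') \<and>
     (\<forall>l<U. y l \<in> {0<..<1}) \<and> (\<forall>l<U. \<forall>j<C. \<forall>j'<C. j \<noteq> j' \<longrightarrow> 2 * y l \<noteq> x j + x j')"

definition tau :: "nat \<Rightarrow> (nat \<Rightarrow> real) \<Rightarrow> nat \<Rightarrow> nat" where
  "tau C x p = the_inv_into {..<C} x (ordstat C x p)"

definition iota :: "nat \<Rightarrow> nat \<Rightarrow> (nat \<Rightarrow> real) \<Rightarrow> (nat \<Rightarrow> real) \<Rightarrow> nat \<Rightarrow> nat" where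
  "iota C K y x l = (THE i. i \<in> {1..C-K+1} \<and> y l \<in> region C K (ordstat C x) i)"

lemma card_filter_sum:
  assumes "finite L" "finite A"
  shows "card {l\<in>L. f l \<in> A} = (\<Sum>i\<in>A. card {l\<in>L. f l = i})"
  using assms(2)
proof (induction A rule: finite_induct)
  case empty then show ?case by simp
next
  case (insert i A)
  have "{l\<in>L. f l \<in> insert i A} = {l\<in>L. f l = i} \<union> {l\<in>L. f l \<in> A}" by auto
  moreover have "card ({l\<in>L. f l = i} \<union> {l\<in>L. f l \<in> A}) = card {l\<in>L. f l = i} + card {l\<in>L. f l \<in> A}"
    using insert assms(1) by (intro card_Un_disjoint) auto
  ultimately show ?case using insert by simp
qed

context
  fixes U C K :: nat and y x :: "nat \<Rightarrow> real"
  assumes gd: "good U C y x" and KC: "K < C" and CK: "C < 2 * K"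
begin

lemma X_mono: "1 \<le> k \<Longrightarrow> k \<le> k' \<Longrightarrow> k' \<le> C \<Longrightarrow> ordstat C x k \<le> ordstat C x k'"
  by (rule ordstat_mono)

lemma X_strict: "1 \<le> k \<Longrightarrow> k < k' \<Longrightarrow> k' \<le> C \<Longrightarrow> ordstat C x k < ordstat C x k'"
  using gd unfolding good_def by (intro ordstat_strict) auto

lemma inj_x: "inj_on x {..<C}"
  using gd unfolding good_def inj_on_def by (meson lessThan_iff)

lemma inj_X: "inj_on (ordstat C x) {1..C}"
proof (rule inj_onI)
  fix a b assume ab: "a \<in> {1..C}" "b \<in> {1..C}" "ordstat C x a = ordstat C x b"
  show "a = b"
  proof (rule ccontr)
    assume "a \<noteq> b"
    then consider "a < b" | "b < a" by linarith
    then show False using X_strict[of a b] X_strict[of b a] ab by cases auto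
  qed
qed

lemma tau_bij: "bij_betw (tau C x) {1..C} {..<C}"
proof -
  have "bij_betw (ordstat C x) {1..C} (x ` {..<C})"
    using inj_X ordstat_image unfolding bij_betw_def by auto
  moreover have "bij_betw (the_inv_into {..<C} x) (x ` {..<C}) {..<C}"
    using inj_x by (intro bij_betw_the_inv_into) (simp add: bij_betw_def)
  ultimately have "bij_betw (the_inv_into {..<C} x \<circ> ordstat C x) {1..C} {..<C}"
    by (rule bij_betw_trans)
  moreover have "tau C x = the_inv_into {..<C} x \<circ> ordstat C x" by (rule ext) (simp add: tau_def)
  ultimately show ?thesis by simp
qed

lemma x_tau:
  assumes "p \<in> {1..C}" shows "x (tau C x p) = ordstat C x p"
proof -
  have "ordstat C x p \<in> ordstat C x ` {1..C}" using assms by blast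
  then have "ordstat C x p \<in> x ` {..<C}" by (simp only: ordstat_image)
  then show ?thesis unfolding tau_def using inj_x by (intro f_the_inv_into_f)
qed

lemma X_range:
  assumes "p \<in> {1..C}" shows "ordstat C x p \<in> {0..1}"
proof -
  have "ordstat C x p \<in> ordstat C x ` {1..C}" using assms by blast
  then have "ordstat C x p \<in> x ` {..<C}" by (simp only: ordstat_image)
  then show ?thesis using gd unfolding good_def by auto
qed

lemma iota_props:
  assumes l: "l < U"
  shows "iota C K y x l \<in> {1..C-K+1} \<and> y l \<in> region C K (ordstat C x) (iota C K y x l)"
proof -
  have yl: "y l \<in> {0..1}" using gd l unfolding good_def by auto
  have "\<exists>!i. i \<in> {1..C-K+1} \<and> y l \<in> region C K (ordstat C x) i"
    using region_exists[OF KC yl] region_unique[where X="ordstat C x", OF X_mono KC] by blast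
  then show ?thesis unfolding iota_def by (rule theI')
qed

lemma iota_iff:
  assumes l: "l < U" and i: "i \<in> {1..C-K+1}"
  shows "y l \<in> region C K (ordstat C x) i \<longleftrightarrow> iota C K y x l = i"
  using iota_props[OF l] region_unique[where X="ordstat C x", OF X_mono KC i] by blast

lemma y_ne_bnd:
  assumes l: "l < U" and k: "k \<in> {2..C-K+1}"
  shows "y l \<noteq> bnd K (ordstat C x) k"
proof
  assume h: "y l = bnd K (ordstat C x) k"
  let ?j = "tau C x (k - 1)" and ?j' = "tau C x (k + K - 1)"
  have k1: "k - 1 \<in> {1..C}" "k + K - 1 \<in> {1..C}" using k KC by auto
  have "k - 1 \<noteq> k + K - 1" using k KC CK by auto
  then have ne: "?j \<noteq> ?j'" using k1 tau_bij unfolding bij_betw_def inj_on_def by blast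
  have lt: "?j < C" "?j' < C" using k1 tau_bij unfolding bij_betw_def by auto
  have "2 * y l = x ?j + x ?j'" using h x_tau[OF k1(1)] x_tau[OF k1(2)] by (simp add: bnd_def)
  then show False using gd l ne lt unfolding good_def by blast
qed

lemma sep:
  assumes l: "l < U" and p: "p \<in> {1..C}" and q: "q \<in> {1..C}"
    and qw: "q \<in> {iota C K y x l..iota C K y x l + K - 1}" and pw: "p \<notin> {iota C K y x l..iota C K y x l + K - 1}"
  shows "\<bar>y l - ordstat C x q\<bar> < \<bar>y l - ordstat C x p\<bar>"
proof -
  define i where "i = iota C K y x l"
  define X where "X = ordstat C x"
  have i: "i \<in> {1..C-K+1}" and yr: "y l \<in> region C K X i" using iota_props[OF l] by (auto simp: i_def X_def)
  have ch: "(i = 1 \<or> bnd K X i < y l) \<and> (i = C-K+1 \<or> y l \<le> bnd K X (i+1))"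
    by (rule region_in[OF KC i yr])
  have qw': "i \<le> q" "q \<le> i + K - 1" using qw by (auto simp: i_def)
  consider "p < i" | "i + K - 1 < p" using pw by (force simp: i_def)
  then show ?thesis
  proof cases
    case 1
    then have "i \<noteq> 1" "i \<ge> 2" using p by auto
    then have b: "bnd K X i < y l" using ch by auto
    have "X p \<le> X (i - 1)" using 1 p i by (unfold X_def, intro X_mono) auto
    moreover have "X q \<le> X (i + K - 1)" using qw' q i KC by (unfold X_def, intro X_mono) auto
    moreover have "X (i - 1) < X (i + K - 1)" using i KC CK \<open>i \<ge> 2\<close> by (unfold X_def, intro X_strict) auto
    moreover have "X p < X q" using 1 qw' p q by (unfold X_def, intro X_strict) auto
    ultimately show ?thesis using b unfolding bnd_def X_def by (simp add: abs_if) linarith?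
  next
    case 2
    then have "i < C - K + 1" using p by auto
    then have "i \<in> {1..C-K+1}" "i + 1 \<in> {2..C-K+1}" using i by auto
    then have b: "y l < bnd K X (i+1)"
      using ch y_ne_bnd[OF l, of "i+1"] \<open>i < C - K + 1\<close> by (auto simp: X_def)
    have "X (i + K) \<le> X p" using 2 p i by (unfold X_def, intro X_mono) auto
    moreover have "X i \<le> X q" using qw' q i by (unfold X_def, intro X_mono) auto
    moreover have "X i < X (i + K)" using i KC CK \<open>i < C - K + 1\<close> by (unfold X_def, intro X_strict) auto
    moreover have "X q < X p" using 2 qw' p q by (unfold X_def, intro X_strict) auto
    ultimately show ?thesis using b unfolding bnd_def X_def by (simp add: abs_if) linarith?
  qed
qed

lemma window_sub:
  assumes l: "l < U"
  shows "{iota C K y x l..iota C K y x l + K - 1} \<subseteq> {1..C}"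
  using iota_props[OF l] KC by auto

lemma win_props:
  assumes l: "l < U"
  shows "tau C x ` {iota C K y x l..iota C K y x l + K - 1} \<subseteq> {..<C}"
    and "card (tau C x ` {iota C K y x l..iota C K y x l + K - 1}) = K"
proof -
  have s: "{iota C K y x l..iota C K y x l + K - 1} \<subseteq> {1..C}" by (rule window_sub[OF l])
  then show "tau C x ` {iota C K y x l..iota C K y x l + K - 1} \<subseteq> {..<C}"
    using tau_bij unfolding bij_betw_def by auto
  have "inj_on (tau C x) {iota C K y x l..iota C K y x l + K - 1}"
    using tau_bij s unfolding bij_betw_def by (blast intro: inj_on_subset)
  then have "card (tau C x ` {iota C K y x l..iota C K y x l + K - 1}) = card {iota C K y x l..iota C K y x l + K - 1}"
    by (rule card_image)
  also have "\<dots> = K" using iota_props[OF l] KC CK by auto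
  finally show "card (tau C x ` {iota C K y x l..iota C K y x l + K - 1}) = K" .
qed

lemma ip_pos_gd:
  assumes l: "l < U" and j: "j < C"
  shows "0 < ip (ctype (y l)) (ctype (x j))" and "\<bar>y l - x j\<bar> \<le> 1"
proof -
  have "y l \<in> {0<..<1}" "x j \<in> {0..1}" using gd l j unfolding good_def by auto
  then have "\<bar>y l - x j\<bar> < 1" by auto
  then show "0 < ip (ctype (y l)) (ctype (x j))" "\<bar>y l - x j\<bar> \<le> 1" by (auto intro: ip_pos)
qed

lemma win_opt:
  assumes l: "l < U" and T: "T \<subseteq> {..<C}" "card T \<le> K"
    and TW: "T \<noteq> tau C x ` {iota C K y x l..iota C K y x l + K - 1}"
  shows "(\<Sum>j\<in>T. ip (ctype (y l)) (ctype (x j))) < (\<Sum>j\<in>tau C x ` {iota C K y x l..iota C K y x l + K - 1}. ip (ctype (y l)) (ctype (x j)))"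
proof (rule window_opt[OF _ win_props(1)[OF l] win_props(2)[OF l] _ _ _ T TW])
  let ?w = "\<lambda>j. ip (ctype (y l)) (ctype (x j))"
  let ?I = "{iota C K y x l..iota C K y x l + K - 1}"
  show "finite {..<C}" by simp
  show "\<forall>j\<in>{..<C}. 0 \<le> ?w j" using ip_pos_gd[OF l] by (auto intro: less_imp_le)
  show "\<forall>b\<in>tau C x ` ?I. 0 < ?w b" using ip_pos_gd(1)[OF l] win_props(1)[OF l] by auto
  show "\<forall>a\<in>{..<C} - tau C x ` ?I. \<forall>b\<in>tau C x ` ?I. ?w a < ?w b"
  proof (intro ballI)
    fix a b assume a: "a \<in> {..<C} - tau C x ` ?I" and b: "b \<in> tau C x ` ?I"
    obtain q where q: "q \<in> ?I" "b = tau C x q" using b by auto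
    have "a \<in> tau C x ` {1..C}" using a tau_bij unfolding bij_betw_def by auto
    then obtain p where p: "p \<in> {1..C}" "a = tau C x p" by auto
    have pI: "p \<notin> ?I" using a p by auto
    have qC: "q \<in> {1..C}" using q window_sub[OF l] by auto
    have "\<bar>y l - ordstat C x q\<bar> < \<bar>y l - ordstat C x p\<bar>" by (rule sep[OF l p(1) qC q(1) pI])
    then have "\<bar>y l - x b\<bar> < \<bar>y l - x a\<bar>" using x_tau[OF p(1)] x_tau[OF qC] p q by simp
    moreover have "\<bar>y l - x a\<bar> \<le> 1" using ip_pos_gd(2)[OF l] a by auto
    ultimately show "?w a < ?w b" by (rule ip_less)
  qed
qed

lemma UC0_iff:
  "is_UC0 U C K y x S \<longleftrightarrow> (\<forall>l<U. S l = tau C x ` {iota C K y x l..iota C K y x l + K - 1})"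
proof
  assume h: "is_UC0 U C K y x S"
  show "\<forall>l<U. S l = tau C x ` {iota C K y x l..iota C K y x l + K - 1}"
  proof (intro allI impI)
    fix l assume l: "l < U"
    let ?W = "tau C x ` {iota C K y x l..iota C K y x l + K - 1}"
    have S: "S l \<subseteq> {..<C}" "card (S l) \<le> K"
      and opt: "(\<Sum>j\<in>?W. ip (ctype (y l)) (ctype (x j))) \<le> (\<Sum>j\<in>S l. ip (ctype (y l)) (ctype (x j)))"
      using h l win_props[OF l] unfolding is_UC0_def by auto
    show "S l = ?W"
    proof (rule ccontr)
      assume "S l \<noteq> ?W"
      from win_opt[OF l S this] opt show False by simp
    qed
  qed
next
  assume h: "\<forall>l<U. S l = tau C x ` {iota C K y x l..iota C K y x l + K - 1}"
  show "is_UC0 U C K y x S"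
    unfolding is_UC0_def
  proof (intro allI impI conjI)
    fix l assume l: "l < U"
    show "S l \<subseteq> {..<C}" "card (S l) \<le> K" using h l win_props[OF l] by auto
    fix T assume T: "T \<subseteq> {..<C}" "card T \<le> K"
    show "(\<Sum>j\<in>T. ip (ctype (y l)) (ctype (x j))) \<le> (\<Sum>j\<in>S l. ip (ctype (y l)) (ctype (x j)))"
      using win_opt[OF l T] h l by (cases "T = S l") (auto intro: less_imp_le)
  qed
qed

lemma num_stay_win:
  assumes h: "\<forall>l<U. S l = tau C x ` {iota C K y x l..iota C K y x l + K - 1}"
  shows "num_stay U C abar S = card {p\<in>{1..C}. abar \<le> card {l\<in>{..<U}. iota C K y x l \<le> p \<and> p \<le> iota C K y x l + K - 1}}"
proof -
  let ?cnt = "\<lambda>p. card {l\<in>{..<U}. iota C K y x l \<le> p \<and> p \<le> iota C K y x l + K - 1}"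
  have inj: "inj_on (tau C x) {1..C}" using tau_bij unfolding bij_betw_def by simp
  have c: "card {i\<in>{..<U}. tau C x p \<in> S i} = ?cnt p" if p: "p \<in> {1..C}" for p
  proof (intro arg_cong[where f=card] set_eqI iffI)
    fix i assume i: "i \<in> {i\<in>{..<U}. tau C x p \<in> S i}"
    then have "tau C x p \<in> tau C x ` {iota C K y x i..iota C K y x i + K - 1}" using h by auto
    then obtain q where q: "q \<in> {iota C K y x i..iota C K y x i + K - 1}" "tau C x p = tau C x q" by auto
    have "q \<in> {1..C}" using q window_sub[of i] i by auto
    then have "p = q" using inj p q unfolding inj_on_def by blast
    then show "i \<in> {l\<in>{..<U}. iota C K y x l \<le> p \<and> p \<le> iota C K y x l + K - 1}" using q i by auto
  next
    fix i assume "i \<in> {l\<in>{..<U}. iota C K y x l \<le> p \<and> p \<le> iota C K y x l + K - 1}"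
    then show "i \<in> {i\<in>{..<U}. tau C x p \<in> S i}" using h by auto
  qed
  have "{j\<in>{..<C}. abar \<le> card {i\<in>{..<U}. j \<in> S i}} = tau C x ` {p\<in>{1..C}. abar \<le> ?cnt p}"
  proof (intro set_eqI iffI)
    fix j assume j: "j \<in> {j\<in>{..<C}. abar \<le> card {i\<in>{..<U}. j \<in> S i}}"
    then have "j \<in> tau C x ` {1..C}" using tau_bij unfolding bij_betw_def by auto
    then obtain p where p: "p \<in> {1..C}" "j = tau C x p" by auto
    then show "j \<in> tau C x ` {p\<in>{1..C}. abar \<le> ?cnt p}" using j c[OF p(1)] by auto
  next
    fix j assume "j \<in> tau C x ` {p\<in>{1..C}. abar \<le> ?cnt p}"
    then obtain p where p: "p \<in> {1..C}" "abar \<le> ?cnt p" "j = tau C x p" by auto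
    then show "j \<in> {j\<in>{..<C}. abar \<le> card {i\<in>{..<U}. j \<in> S i}}"
      using c[OF p(1)] tau_bij unfolding bij_betw_def by auto
  qed
  then have "num_stay U C abar S = card (tau C x ` {p\<in>{1..C}. abar \<le> ?cnt p})"
    unfolding num_stay_def by simp
  also have "\<dots> = card {p\<in>{1..C}. abar \<le> ?cnt p}"
    using inj by (intro card_image) (auto intro: inj_on_subset)
  finally show ?thesis .
qed

end

lemma unif01_prob: "prob_space unif01"
  unfolding unif01_def by (rule prob_space_uniform_measure) auto

lemma sets_unif01[simp, measurable_cong]: "sets unif01 = sets borel"
  unfolding unif01_def by simp

lemma space_unif01[simp]: "space unif01 = UNIV"
  unfolding unif01_def by simp

lemma unif01_null: "A \<in> sets borel \<Longrightarrow> emeasure lborel (A \<inter> {0..1}) = 0 \<Longrightarrow> emeasure unif01 A = 0"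
  unfolding unif01_def by (simp add: Int_commute)

lemma unif01_point: "emeasure unif01 {c} = 0"
  by (rule unif01_null) (auto intro!: emeasure_lborel_countable countable_finite)

interpretation U01: product_prob_space "\<lambda>_::nat. unif01" "I" for I
  by (simp add: product_prob_space_def product_sigma_finite_def prob_space_imp_sigma_finite unif01_prob
     product_prob_space_axioms_def)


lemma pim_single_null:
  fixes I :: "nat set"
  assumes "i \<in> I" "A \<in> sets borel" "emeasure unif01 A = 0"
  shows "{f\<in>space (PiM I (\<lambda>_. unif01)). f i \<in> A} \<in> null_sets (PiM I (\<lambda>_. unif01))"
  using U01.emeasure_PiM_Collect_single[of i I A] assms by (auto simp: null_sets_def)

lemma pim_diag_null:
  fixes I :: "nat set"
  assumes "finite I" "j \<in> I" "j' \<in> I" "j \<noteq> j'"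
  shows "{f\<in>space (PiM I (\<lambda>_. unif01)). f j = f j'} \<in> null_sets (PiM I (\<lambda>_. unif01))"
proof -
  let ?S = "{f\<in>space (PiM I (\<lambda>_. unif01)). f j = f j'}"
  have I: "I = insert j (I - {j})" using assms by auto
  have Sm: "?S \<in> sets (PiM I (\<lambda>_. unif01))"
    using assms by measurable
  have "emeasure (PiM I (\<lambda>_. unif01)) ?S = (\<integral>\<^sup>+ f. indicator ?S f \<partial>PiM (insert j (I - {j})) (\<lambda>_. unif01))"
    using Sm I by simp
  also have "\<dots> = (\<integral>\<^sup>+ x. \<integral>\<^sup>+ y. indicator ?S (x(j := y)) \<partial>unif01 \<partial>PiM (I - {j}) (\<lambda>_. unif01))"
    apply (rule U01.product_nn_integral_insert)
    using assms Sm I by (auto simp del: insert_Diff_single)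
  also have "\<dots> = (\<integral>\<^sup>+ x. 0 \<partial>PiM (I - {j}) (\<lambda>_. unif01))"
  proof (rule nn_integral_cong)
    fix x assume x: "x \<in> space (PiM (I - {j}) (\<lambda>_. unif01))"
    have "(\<integral>\<^sup>+ y. indicator ?S (x(j := y)) \<partial>unif01) = (\<integral>\<^sup>+ y. indicator {x j'} y \<partial>unif01)"
    proof (rule nn_integral_cong)
      fix y
      have "x(j := y) \<in> space (PiM I (\<lambda>_. unif01))"
        using x assms by (auto simp: space_PiM PiE_def extensional_def)
      then show "indicator ?S (x(j := y)) = (indicator {x j'} y :: ennreal)"
        using assms by (auto simp: indicator_def)
    qed
    also have "\<dots> = 0" using unif01_point by simp
    finally show "(\<integral>\<^sup>+ y. indicator ?S (x(j := y)) \<partial>unif01) = 0" .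
  qed
  finally show ?thesis using Sm by (simp add: null_sets_def)
qed


lemma pim_AE_single:
  fixes I :: "nat set"
  assumes "i \<in> I" "A \<in> sets borel" "emeasure unif01 A = 0"
  shows "AE f in PiM I (\<lambda>_. unif01). f i \<notin> A"
  by (rule AE_I'[OF pim_single_null[OF assms]]) auto

lemma pim_AE_diag:
  fixes I :: "nat set"
  assumes "finite I" "j \<in> I" "j' \<in> I" "j \<noteq> j'"
  shows "AE f in PiM I (\<lambda>_. unif01). f j \<noteq> f j'"
  by (rule AE_I'[OF pim_diag_null[OF assms]]) auto

lemma unif01_compl: "emeasure unif01 (- {0..1}) = 0"
  by (rule unif01_null) auto

lemma unif01_compl2: "emeasure unif01 (- {0<..<1}) = 0"
proof (rule unif01_null)
  have "- {0<..<1} \<inter> {0..1::real} = {0,1}" by auto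
  then show "emeasure lborel (- {0<..<1} \<inter> {0..1::real}) = 0"
    by (simp add: emeasure_lborel_countable countable_finite)
qed auto

interpretation PP: pair_sigma_finite "PiM {..<U} (\<lambda>_. unif01)" "PiM {..<C} (\<lambda>_. unif01)" for U C
  by (simp add: pair_sigma_finite_def prob_space_imp_sigma_finite prob_space_PiM unif01_prob)

lemma AE_snd:
  assumes m: "{\<omega> \<in> space (model U C). P (snd \<omega>)} \<in> sets (model U C)"
    and ae: "AE x in PiM {..<C} (\<lambda>_. unif01). P x"
  shows "AE \<omega> in model U C. P (snd \<omega>)"
  unfolding model_def
  by (rule PP.AE_pair_measure[OF m[unfolded model_def]]) (simp add: ae)

lemma AE_fst:
  assumes m: "{\<omega> \<in> space (model U C). P (fst \<omega>) (snd \<omega>)} \<in> sets (model U C)"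
    and ae: "\<And>x. AE y in PiM {..<U} (\<lambda>_. unif01). P y x"
  shows "AE \<omega> in model U C. P (fst \<omega>) (snd \<omega>)"
  unfolding model_def
proof (rule PP.AE_pair_measure[OF m[unfolded model_def]], unfold fst_conv snd_conv)
  show "AE y in PiM {..<U} (\<lambda>_. unif01). AE x in PiM {..<C} (\<lambda>_. unif01). P y x"
    using PP.AE_commute[OF m[unfolded model_def]] ae by (auto intro: AE_I2)
qed

lemma AE_good: "AE \<omega> in model U C. good U C (fst \<omega>) (snd \<omega>)"
proof -
  let ?MU = "PiM {..<U} (\<lambda>_. unif01)" and ?MC = "PiM {..<C} (\<lambda>_. unif01)"
  have a1: "AE \<omega> in model U C. snd \<omega> j \<in> {0..1}" if "j < C" for j
  proof (rule AE_snd)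
    show "{\<omega> \<in> space (model U C). snd \<omega> j \<in> {0..1}} \<in> sets (model U C)"
      unfolding model_def by (insert that, measurable)
    show "AE x in ?MC. x j \<in> {0..1}"
      using pim_AE_single[of j "{..<C}" "- {0..1}"] unif01_compl that by simp
  qed
  have a2: "AE \<omega> in model U C. snd \<omega> j - snd \<omega> j' \<notin> {0}" if "j < C" "j' < C" "j \<noteq> j'" for j j'
  proof (rule AE_snd)
    show "{\<omega> \<in> space (model U C). snd \<omega> j - snd \<omega> j' \<notin> {0}} \<in> sets (model U C)"
      unfolding model_def by (insert that, measurable)
    show "AE x in ?MC. x j - x j' \<notin> {0}"
    proof -
      have "AE x in ?MC. x j \<noteq> x j'" by (rule pim_AE_diag) (use that in auto)
      then show ?thesis by (elim AE_mp) (auto intro!: AE_I2)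
    qed
  qed
  have a3: "AE \<omega> in model U C. fst \<omega> l \<in> {0<..<1}" if "l < U" for l
  proof (rule AE_fst[where P="\<lambda>y x. y l \<in> {0<..<1}"])
    show "{\<omega> \<in> space (model U C). fst \<omega> l \<in> {0<..<1}} \<in> sets (model U C)"
      unfolding model_def by (insert that, measurable)
    show "AE y in ?MU. y l \<in> {0<..<1}" for x
      using pim_AE_single[of l "{..<U}" "- {0<..<1}"] unif01_compl2 that by simp
  qed
  have a4: "AE \<omega> in model U C. 2 * fst \<omega> l - snd \<omega> j - snd \<omega> j' \<notin> {0}" if "l < U" "j < C" "j' < C" for l j j'
  proof (rule AE_fst[where P="\<lambda>y x. 2 * y l - x j - x j' \<notin> {0}"])
    show "{\<omega> \<in> space (model U C). 2 * fst \<omega> l - snd \<omega> j - snd \<omega> j' \<notin> {0}} \<in> sets (model U C)"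
      unfolding model_def by (insert that, measurable)
    show "AE y in ?MU. 2 * y l - x j - x j' \<notin> {0}" for x
    proof -
      have "AE y in ?MU. y l \<notin> {(x j + x j')/2}"
        by (rule pim_AE_single) (auto simp: that unif01_point)
      then show ?thesis by (elim AE_mp) (auto intro!: AE_I2)
    qed
  qed
  have "AE \<omega> in model U C. (\<forall>j\<in>{..<C}. snd \<omega> j \<in> {0..1}) \<and>
      (\<forall>j\<in>{..<C}. \<forall>j'\<in>{..<C}. j \<noteq> j' \<longrightarrow> snd \<omega> j - snd \<omega> j' \<notin> {0}) \<and>
      (\<forall>l\<in>{..<U}. fst \<omega> l \<in> {0<..<1}) \<and>
      (\<forall>l\<in>{..<U}. \<forall>j\<in>{..<C}. \<forall>j'\<in>{..<C}. 2 * fst \<omega> l - snd \<omega> j - snd \<omega> j' \<notin> {0})"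
    apply (intro AE_conjI AE_finite_allI finite_lessThan)
    using a1 a2 a3 a4 by (auto intro: AE_I2)
  then show ?thesis
    unfolding good_def by (elim AE_mp) (intro AE_I2 impI; simp add: diff_eq_eq add.commute)
qed

lemma frac_cond:
  fixes a r C K :: nat
  assumes "0 < r" "0 < C"
  shows "real K / real C \<le> real a / real (r * C) \<longleftrightarrow> r * K \<le> a"
proof -
  have eq: "real K / real C = real (r * K) / real (r * C)" using assms by simp
  have "real (r * K) / real (r * C) \<le> real a / real (r * C) \<longleftrightarrow> real (r * K) \<le> real a"
  proof -
    have "0 < real r * real C" using assms by simp
    then show ?thesis unfolding divide_le_cancel by auto
  qed
  then show ?thesis unfolding eq by (simp only: of_nat_le_iff)
qed

context
  fixes U C K r abar :: nat and y x :: "nat \<Rightarrow> real"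
  assumes gd: "good U C y x" and KC: "K < C" and CK: "C < 2 * K"
    and r: "0 < r" and U: "U = r * C" and ab: "abar = r * K"
begin

lemma Ucount_eq:
  assumes j: "j \<in> {1..C-K+1}"
  shows "Ucount U C K y x j = card {l\<in>{..<U}. iota C K y x l = j}"
  unfolding Ucount_def using iota_iff[OF gd KC CK _ j] by (intro arg_cong[where f=card]) auto

lemma sumP:
  assumes i: "i \<in> {1..C-K+1}"
  shows "(\<Sum>j = 1..i. Ucount U C K y x j) = card {l\<in>{..<U}. iota C K y x l \<le> i}"
proof -
  have "(\<Sum>j = 1..i. Ucount U C K y x j) = (\<Sum>j\<in>{1..i}. card {l\<in>{..<U}. iota C K y x l = j})"
    using i by (intro sum.cong refl Ucount_eq) auto
  also have "\<dots> = card {l\<in>{..<U}. iota C K y x l \<in> {1..i}}"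
    by (rule card_filter_sum[symmetric]) auto
  also have "\<dots> = card {l\<in>{..<U}. iota C K y x l \<le> i}"
    using iota_props[OF gd KC CK] by (intro arg_cong[where f=card]) fastforce
  finally show ?thesis .
qed

lemma sumS:
  assumes i: "i \<in> {1..C-K+1}"
  shows "(\<Sum>j = i..C-K+1. Ucount U C K y x j) = card {l\<in>{..<U}. i \<le> iota C K y x l}"
proof -
  have "(\<Sum>j = i..C-K+1. Ucount U C K y x j) = (\<Sum>j\<in>{i..C-K+1}. card {l\<in>{..<U}. iota C K y x l = j})"
    using i by (intro sum.cong refl Ucount_eq) auto
  also have "\<dots> = card {l\<in>{..<U}. iota C K y x l \<in> {i..C-K+1}}"
    by (rule card_filter_sum[symmetric]) auto
  also have "\<dots> = card {l\<in>{..<U}. i \<le> iota C K y x l}"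
    using iota_props[OF gd KC CK] by (intro arg_cong[where f=card]) fastforce
  finally show ?thesis .
qed

lemma lhs_iff:
  "(\<forall>S. is_UC0 U C K y x S \<longrightarrow> K \<le> num_stay U C abar S) \<longleftrightarrow>
   K \<le> card {p\<in>{1..C}. abar \<le> card {l\<in>{..<U}. iota C K y x l \<le> p \<and> p \<le> iota C K y x l + K - 1}}"
proof
  assume h: "\<forall>S. is_UC0 U C K y x S \<longrightarrow> K \<le> num_stay U C abar S"
  let ?S = "\<lambda>l. tau C x ` {iota C K y x l..iota C K y x l + K - 1}"
  have "is_UC0 U C K y x ?S" using UC0_iff[OF gd KC CK] by simp
  then have "K \<le> num_stay U C abar ?S" using h by simp
  then show "K \<le> card {p\<in>{1..C}. abar \<le> card {l\<in>{..<U}. iota C K y x l \<le> p \<and> p \<le> iota C K y x l + K - 1}}"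
    using num_stay_win[OF gd KC CK, of ?S] by simp
next
  assume h: "K \<le> card {p\<in>{1..C}. abar \<le> card {l\<in>{..<U}. iota C K y x l \<le> p \<and> p \<le> iota C K y x l + K - 1}}"
  show "\<forall>S. is_UC0 U C K y x S \<longrightarrow> K \<le> num_stay U C abar S"
  proof (intro allI impI)
    fix S assume "is_UC0 U C K y x S"
    then have "\<forall>l<U. S l = tau C x ` {iota C K y x l..iota C K y x l + K - 1}"
      using UC0_iff[OF gd KC CK] by simp
    then show "K \<le> num_stay U C abar S" using num_stay_win[OF gd KC CK] h by simp
  qed
qed

lemma core:
  "(\<forall>S. is_UC0 U C K y x S \<longrightarrow> K \<le> num_stay U C abar S) \<longleftrightarrow>
   (\<exists>i\<in>{1..C-K+1}. real (\<Sum>j = 1..i. Ucount U C K y x j) / real (r * C) \<ge> real K / real C \<and>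
              real (\<Sum>j = i..C - K + 1. Ucount U C K y x j) / real (r * C) \<ge> real K / real C)"
proof -
  have C0: "0 < C" using KC by simp
  have "(\<exists>i\<in>{1..C-K+1}. real (\<Sum>j = 1..i. Ucount U C K y x j) / real (r * C) \<ge> real K / real C \<and>
              real (\<Sum>j = i..C - K + 1. Ucount U C K y x j) / real (r * C) \<ge> real K / real C)
    \<longleftrightarrow> (\<exists>i\<in>{1..C-K+1}. r * K \<le> card {l\<in>{..<U}. iota C K y x l \<le> i} \<and> r * K \<le> card {l\<in>{..<U}. i \<le> iota C K y x l})"
    using frac_cond[OF r C0] sumP sumS by (intro bex_cong refl) simp
  also have "\<dots> \<longleftrightarrow> K \<le> card {p\<in>{1..C}. r * K \<le> card {l\<in>{..<U}. iota C K y x l \<le> p \<and> p \<le> iota C K y x l + K - 1}}"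
    using iota_props[OF gd KC CK] by (intro stay_comb[symmetric] KC CK r U) auto
  finally show ?thesis using lhs_iff ab by simp
qed

end

lemma model_prob: "prob_space (model U C)"
  unfolding model_def by (intro prob_space_pair prob_space_PiM unif01_prob)

lemma meas_comp_C: "j < C \<Longrightarrow> (\<lambda>x. x j) \<in> borel_measurable (PiM {..<C} (\<lambda>_. unif01))"
  by measurable

lemma meas_fst: "l < U \<Longrightarrow> (\<lambda>\<omega>. fst \<omega> l) \<in> borel_measurable (model U C)"
  unfolding model_def by measurable

lemma meas_ip: "l < U \<Longrightarrow> j < C \<Longrightarrow> (\<lambda>\<omega>. ip (ctype (fst \<omega> l)) (ctype (snd \<omega> j))) \<in> borel_measurable (model U C)"
  unfolding ip_def ctype_def model_def by measurable

lemma pred_le_real: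
  "f \<in> borel_measurable M \<Longrightarrow> g \<in> borel_measurable M \<Longrightarrow> Measurable.pred M (\<lambda>w. (f w :: real) \<le> g w)"
  unfolding pred_def by (rule borel_measurable_le)

lemma meas_ordstat0:
  assumes k: "1 \<le> k" "k \<le> C"
  shows "(\<lambda>x. ordstat C x k) \<in> borel_measurable (PiM {..<C} (\<lambda>_. unif01))"
proof (rule borel_measurableI_le)
  fix t
  let ?M = "PiM {..<C} (\<lambda>_. unif01)"
  have eq: "{x\<in>space ?M. ordstat C x k \<le> t} = {x\<in>space ?M. \<exists>T\<in>Pow {..<C}. k \<le> card T \<and> (\<forall>j\<in>T. x j \<le> t)}"
  proof (intro Collect_cong conj_cong refl)
    fix x
    show "ordstat C x k \<le> t \<longleftrightarrow> (\<exists>T\<in>Pow {..<C}. k \<le> card T \<and> (\<forall>j\<in>T. x j \<le> t))"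
    proof
      assume "ordstat C x k \<le> t"
      then have "k \<le> card {j\<in>{..<C}. x j \<le> t}" using ordstat_le_iff[OF k] by simp
      then show "\<exists>T\<in>Pow {..<C}. k \<le> card T \<and> (\<forall>j\<in>T. x j \<le> t)"
        by (intro bexI[of _ "{j\<in>{..<C}. x j \<le> t}"]) auto
    next
      assume "\<exists>T\<in>Pow {..<C}. k \<le> card T \<and> (\<forall>j\<in>T. x j \<le> t)"
      then obtain T where T: "T \<subseteq> {..<C}" "k \<le> card T" "\<forall>j\<in>T. x j \<le> t" by auto
      have "card T \<le> card {j\<in>{..<C}. x j \<le> t}" using T by (intro card_mono) auto
      then show "ordstat C x k \<le> t" using ordstat_le_iff[OF k] T by simp
    qed
  qed
  have "Measurable.pred ?M (\<lambda>x. \<exists>T\<in>Pow {..<C}. k \<le> card T \<and> (\<forall>j\<in>T. x j \<le> t))"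
  proof (intro pred_intros_finite(4) pred_intros_conj1' pred_intros_finite(3) finite_Pow_iff[THEN iffD2] finite_lessThan)
    fix T j assume "T \<in> Pow {..<C}" "j \<in> T"
    then have "j < C" by auto
    then show "Measurable.pred ?M (\<lambda>x. x j \<le> t)"
      by (intro pred_le_real meas_comp_C borel_measurable_const)
  qed (meson PowD finite_lessThan finite_subset)
  then show "{x\<in>space ?M. ordstat C x k \<le> t} \<in> sets ?M" unfolding eq pred_def .
qed

lemma meas_ordstat:
  assumes k: "1 \<le> k" "k \<le> C"
  shows "(\<lambda>\<omega>. ordstat C (snd \<omega>) k) \<in> borel_measurable (model U C)"
  unfolding model_def
  using measurable_comp[OF measurable_snd meas_ordstat0[OF k]] by (simp add: comp_def)

lemma region1: "region C K X 1 = {0 .. (X 1 + X (K+1))/2}"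
  by (simp add: region_def)

lemma region2: "K < C \<Longrightarrow> region C K X (C-K+1) = {(X (C-K) + X C)/2 <.. 1}"
  by (simp add: region_def)

lemma region3: "j \<noteq> 1 \<Longrightarrow> j \<noteq> C-K+1 \<Longrightarrow> region C K X j = {(X (j - 1) + X (j + K - 1)) / 2 <.. (X j + X (j + K)) / 2}"
  by (simp add: region_def)

lemma pred_region:
  assumes l: "l < U" and KC: "K < C" and j: "j \<in> {1..C-K+1}"
  shows "Measurable.pred (model U C) (\<lambda>\<omega>. fst \<omega> l \<in> region C K (ordstat C (snd \<omega>)) j)"
proof -
  note f = meas_fst[OF l, of C]
  consider "j = 1" | "j = C-K+1" | "j \<noteq> 1" "j \<noteq> C-K+1" by blast
  then show ?thesis
  proof cases
    case 1
    have a: "(\<lambda>\<omega>. (ordstat C (snd \<omega>) 1 + ordstat C (snd \<omega>) (K+1)) / 2) \<in> borel_measurable (model U C)"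
      using KC by (intro borel_measurable_divide borel_measurable_add meas_ordstat borel_measurable_const) auto
    show ?thesis unfolding 1 region1 atLeastAtMost_iff
      by (intro pred_intros_logic(3) pred_le_real a f borel_measurable_const)
  next
    case 2
    have "j \<noteq> 1" using KC 2 by simp
    have a: "(\<lambda>\<omega>. (ordstat C (snd \<omega>) (C - K) + ordstat C (snd \<omega>) C) / 2) \<in> borel_measurable (model U C)"
      using KC by (intro borel_measurable_divide borel_measurable_add meas_ordstat borel_measurable_const) auto
    show ?thesis unfolding 2 region2[OF KC] greaterThanAtMost_iff
      by (intro pred_intros_logic(3) pred_le_real a f borel_measurable_const borel_measurable_pred_less)
  next
    case 3
    have a: "(\<lambda>\<omega>. (ordstat C (snd \<omega>) (j - 1) + ordstat C (snd \<omega>) (j + K - 1)) / 2) \<in> borel_measurable (model U C)"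
      using KC 3 j by (intro borel_measurable_divide borel_measurable_add meas_ordstat borel_measurable_const) auto
    have b: "(\<lambda>\<omega>. (ordstat C (snd \<omega>) j + ordstat C (snd \<omega>) (j + K)) / 2) \<in> borel_measurable (model U C)"
      using KC 3 j by (intro borel_measurable_divide borel_measurable_add meas_ordstat borel_measurable_const) auto
    show ?thesis unfolding region3[OF 3] greaterThanAtMost_iff
      by (intro pred_intros_logic(3) pred_le_real a b f borel_measurable_const borel_measurable_pred_less)
  qed
qed

lemma real_card_filter: "finite A \<Longrightarrow> real (card {l\<in>A. P l}) = (\<Sum>l\<in>A. if P l then 1 else 0)"
  by (simp add: sum.inter_filter[symmetric])

lemma meas_Usum:
  assumes J: "J \<subseteq> {1..C-K+1}" and KC: "K < C"
  shows "(\<lambda>\<omega>. real (\<Sum>j\<in>J. Ucount U C K (fst \<omega>) (snd \<omega>) j)) \<in> borel_measurable (model U C)"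
proof -
  have eq: "(\<lambda>\<omega>. real (\<Sum>j\<in>J. Ucount U C K (fst \<omega>) (snd \<omega>) j)) =
    (\<lambda>\<omega>. \<Sum>j\<in>J. \<Sum>l\<in>{..<U}. if fst \<omega> l \<in> region C K (ordstat C (snd \<omega>)) j then 1 else 0)"
    by (rule ext) (simp only: Ucount_def of_nat_sum real_card_filter[OF finite_lessThan])
  show ?thesis unfolding eq
  proof (intro borel_measurable_sum measurable_If borel_measurable_const)
    fix j l assume "j \<in> J" "l \<in> {..<U}"
    then show "{\<omega> \<in> space (model U C). fst \<omega> l \<in> region C K (ordstat C (snd \<omega>)) j} \<in> sets (model U C)"
      using pred_region[OF _ KC, of l U j] J unfolding pred_def by auto
  qed
qed

lemma meas_B:
  assumes i: "i \<in> {1..C-K+1}" and KC: "K < C"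
  shows "{\<omega> \<in> space (model U C).
              real (\<Sum>j = 1..i. Ucount U C K (fst \<omega>) (snd \<omega>) j) / real (r * C) \<ge> real K / real C \<and>
              real (\<Sum>j = i..C - K + 1. Ucount U C K (fst \<omega>) (snd \<omega>) j) / real (r * C) \<ge> real K / real C}
         \<in> sets (model U C)"
proof -
  have "Measurable.pred (model U C) (\<lambda>\<omega>.
              real (\<Sum>j = 1..i. Ucount U C K (fst \<omega>) (snd \<omega>) j) / real (r * C) \<ge> real K / real C \<and>
              real (\<Sum>j = i..C - K + 1. Ucount U C K (fst \<omega>) (snd \<omega>) j) / real (r * C) \<ge> real K / real C)"
    using i by (intro pred_intros_logic(3) pred_le_real borel_measurable_const borel_measurable_divide meas_Usum KC) auto
  then show ?thesis unfolding pred_def .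
qed

lemma is_UC0_restrict: "is_UC0 U C K y x S = is_UC0 U C K y x (restrict S {..<U})"
  unfolding is_UC0_def by simp

lemma num_stay_restrict: "num_stay U C abar S = num_stay U C abar (restrict S {..<U})"
proof -
  have "\<And>j. {i\<in>{..<U}. j \<in> restrict S {..<U} i} = {i\<in>{..<U}. j \<in> S i}" by auto
  then show ?thesis unfolding num_stay_def by simp
qed

lemma is_UC0_alt:
  "is_UC0 U C K y x S \<longleftrightarrow> (\<forall>i\<in>{..<U}. (S i \<subseteq> {..<C} \<and> card (S i) \<le> K) \<and>
     (\<forall>T\<in>Pow {..<C}. card T \<le> K \<longrightarrow>
        (\<Sum>j\<in>T. ip (ctype (y i)) (ctype (x j))) \<le> (\<Sum>j\<in>S i. ip (ctype (y i)) (ctype (x j)))))"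
  unfolding is_UC0_def by auto

lemma meas_UC0: "Measurable.pred (model U C) (\<lambda>\<omega>. is_UC0 U C K (fst \<omega>) (snd \<omega>) S)"
  unfolding is_UC0_alt
proof (intro pred_intros_finite(3) pred_intros_conj1' finite_lessThan finite_Pow_iff[THEN iffD2] pred_intros_imp')
  fix i T assume i: "i \<in> {..<U}" and Si: "S i \<subseteq> {..<C} \<and> card (S i) \<le> K" and T: "T \<in> Pow {..<C}"
  show "Measurable.pred (model U C) (\<lambda>\<omega>. (\<Sum>j\<in>T. ip (ctype (fst \<omega> i)) (ctype (snd \<omega> j))) \<le> (\<Sum>j\<in>S i. ip (ctype (fst \<omega> i)) (ctype (snd \<omega> j))))"
  proof (intro pred_le_real borel_measurable_sum)
    fix j assume "j \<in> T" then show "(\<lambda>\<omega>. ip (ctype (fst \<omega> i)) (ctype (snd \<omega> j))) \<in> borel_measurable (model U C)"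
      using i T by (intro meas_ip) auto
  next
    fix j assume "j \<in> S i" then show "(\<lambda>\<omega>. ip (ctype (fst \<omega> i)) (ctype (snd \<omega> j))) \<in> borel_measurable (model U C)"
      using i Si by (intro meas_ip) auto
  qed
qed

lemma meas_L:
  "{\<omega> \<in> space (model U C). \<forall>S. is_UC0 U C K (fst \<omega>) (snd \<omega>) S \<longrightarrow> K \<le> num_stay U C abar S} \<in> sets (model U C)"
proof -
  let ?F = "PiE {..<U} (\<lambda>_. Pow {..<C})"
  have eq: "(\<forall>S. is_UC0 U C K y x S \<longrightarrow> K \<le> num_stay U C abar S) \<longleftrightarrow>
            (\<forall>S\<in>?F. is_UC0 U C K y x S \<longrightarrow> K \<le> num_stay U C abar S)" for y x
  proof
    assume h: "\<forall>S\<in>?F. is_UC0 U C K y x S \<longrightarrow> K \<le> num_stay U C abar S"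
    show "\<forall>S. is_UC0 U C K y x S \<longrightarrow> K \<le> num_stay U C abar S"
    proof (intro allI impI)
      fix S assume S: "is_UC0 U C K y x S"
      have "restrict S {..<U} \<in> ?F" using S unfolding restrict_PiE_iff is_UC0_def by auto
      moreover have "is_UC0 U C K y x (restrict S {..<U})" using S is_UC0_restrict by blast
      ultimately have "K \<le> num_stay U C abar (restrict S {..<U})" using h by blast
      then show "K \<le> num_stay U C abar S" using num_stay_restrict by metis
    qed
  qed auto
  have "Measurable.pred (model U C) (\<lambda>\<omega>. \<forall>S\<in>?F. is_UC0 U C K (fst \<omega>) (snd \<omega>) S \<longrightarrow> K \<le> num_stay U C abar S)"
    by (intro pred_intros_finite(3) pred_intros_logic(4) meas_UC0 finite_PiE finite_lessThan finite_Pow_iff[THEN iffD2])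
      (auto simp: pred_def)
  then show ?thesis unfolding eq pred_def .
qed

lemma Usum_le:
  assumes J: "J \<subseteq> {1..C-K+1}" and KC: "K < C"
  shows "(\<Sum>j\<in>J. Ucount U C K y x j) \<le> U"
proof -
  let ?A = "\<lambda>j. {l\<in>{..<U}. y l \<in> region C K (ordstat C x) j}"
  have fJ: "finite J" using J finite_subset by blast
  have "(\<Sum>j\<in>J. Ucount U C K y x j) = card (\<Union>(?A ` J))"
    unfolding Ucount_def
  proof (rule card_UN_disjoint[symmetric, OF fJ])
    show "\<forall>i\<in>J. finite (?A i)" by auto
    show "\<forall>i\<in>J. \<forall>j\<in>J. i \<noteq> j \<longrightarrow> ?A i \<inter> ?A j = {}"
      using region_unique[where X="ordstat C x", OF ordstat_mono KC] J by blast
  qed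
  also have "\<dots> \<le> card {..<U}" by (intro card_mono) auto
  finally show ?thesis by simp
qed

theorem lemma13:
  fixes r U C K abar :: nat
  assumes "0 < r" and "real C / 2 < real K" and "K < C"
    and "U = r * C" and "abar = r * K"
  shows "measure (model U C)
           {\<omega> \<in> space (model U C). \<forall>S. is_UC0 U C K (fst \<omega>) (snd \<omega>) S
                                 \<longrightarrow> K \<le> num_stay U C abar S}
       = (\<Sum>i = 1..C - K + 1. measure (model U C)
           {\<omega> \<in> space (model U C).
              real (\<Sum>j = 1..i. Ucount U C K (fst \<omega>) (snd \<omega>) j) / real (r * C) \<ge> real K / real C \<and>
              real (\<Sum>j = i..C - K + 1. Ucount U C K (fst \<omega>) (snd \<omega>) j) / real (r * C) \<ge> real K / real C})"
proof -
  note r = assms(1) and KC = assms(3) and U = assms(4) and ab = assms(5)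
  have CK: "C < 2 * K" using assms(2) by linarith
  have C0: "0 < C" using KC by simp
  interpret P: prob_space "model U C" by (rule model_prob)
  define L where "L = {\<omega> \<in> space (model U C). \<forall>S. is_UC0 U C K (fst \<omega>) (snd \<omega>) S
                                 \<longrightarrow> K \<le> num_stay U C abar S}"
  define B where "B = (\<lambda>i. {\<omega> \<in> space (model U C).
              real (\<Sum>j = 1..i. Ucount U C K (fst \<omega>) (snd \<omega>) j) / real (r * C) \<ge> real K / real C \<and>
              real (\<Sum>j = i..C - K + 1. Ucount U C K (fst \<omega>) (snd \<omega>) j) / real (r * C) \<ge> real K / real C})"
  have Lm: "L \<in> sets (model U C)" unfolding L_def by (rule meas_L)
  have Bm: "B i \<in> sets (model U C)" if "i \<in> {1..C-K+1}" for i
    unfolding B_def using that KC by (rule meas_B)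
  have UBm: "(\<Union>i\<in>{1..C-K+1}. B i) \<in> sets (model U C)"
    using Bm by (intro sets.finite_UN) auto
  have ae: "AE \<omega> in model U C. \<omega> \<in> L \<longleftrightarrow> \<omega> \<in> (\<Union>i\<in>{1..C-K+1}. B i)"
    using AE_good[of U C]
  proof (elim AE_mp, intro AE_I2 impI)
    fix \<omega> assume sp: "\<omega> \<in> space (model U C)" and g: "good U C (fst \<omega>) (snd \<omega>)"
    show "\<omega> \<in> L \<longleftrightarrow> \<omega> \<in> (\<Union>i\<in>{1..C-K+1}. B i)"
      using core[OF g KC CK r U ab] sp unfolding L_def B_def by auto
  qed
  have disj: "disjoint_family_on B {1..C-K+1}"
  proof (unfold disjoint_family_on_def, intro ballI impI)
    fix i i' assume i: "i \<in> {1..C-K+1}" "i' \<in> {1..C-K+1}" "i \<noteq> i'"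
    show "B i \<inter> B i' = {}"
    proof (rule ccontr)
      assume "B i \<inter> B i' \<noteq> {}"
      then obtain \<omega> where w: "\<omega> \<in> B i" "\<omega> \<in> B i'" by auto
      let ?u = "Ucount U C K (fst \<omega>) (snd \<omega>)"
      have P: "r * K \<le> (\<Sum>j = 1..a. ?u j)" and S: "r * K \<le> (\<Sum>j = a..C-K+1. ?u j)"
        if "\<omega> \<in> B a" for a
      proof -
        have h: "real K / real C \<le> real (\<Sum>j = 1..a. ?u j) / real (r*C)"
           "real K / real C \<le> real (\<Sum>j = a..C-K+1. ?u j) / real (r*C)"
          using that unfolding B_def by blast+
        show "r * K \<le> (\<Sum>j = 1..a. ?u j)" using h(1) frac_cond[OF r C0, of K "(\<Sum>j = 1..a. ?u j)"] by blast
        show "r * K \<le> (\<Sum>j = a..C-K+1. ?u j)" using h(2) frac_cond[OF r C0, of K "(\<Sum>j = a..C-K+1. ?u j)"] by blast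
      qed
      have key: "False" if lt: "a < b" and a: "a \<in> {1..C-K+1}" "b \<in> {1..C-K+1}" and wa: "\<omega> \<in> B a" "\<omega> \<in> B b" for a b
      proof -
        have "(\<Sum>j = 1..a. ?u j) + (\<Sum>j = b..C-K+1. ?u j) = (\<Sum>j \<in> {1..a} \<union> {b..C-K+1}. ?u j)"
          using lt by (intro sum.union_disjoint[symmetric]) auto
        also have "\<dots> \<le> U" using a by (intro Usum_le KC) auto
        finally have "(\<Sum>j = 1..a. ?u j) + (\<Sum>j = b..C-K+1. ?u j) \<le> U" .
        moreover have "r * K + r * K \<le> (\<Sum>j = 1..a. ?u j) + (\<Sum>j = b..C-K+1. ?u j)"
          using P[OF wa(1)] S[OF wa(2)] by simp
        moreover have "U < r * K + r * K"
        proof -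
          have h: "r * C < r * (2 * K)" using CK r by (intro mult_strict_left_mono)
          have e: "r * (2 * K) = r * K + r * K" by (simp add: algebra_simps)
          show ?thesis using h e U by linarith
        qed
        ultimately show False by simp
      qed
      show False
      proof (cases "i < i'")
        case True show False using key[OF True i(1) i(2) w] .
      next
        case False then have "i' < i" using i(3) by simp
        then show False using key[OF _ i(2) i(1) w(2) w(1)] by simp
      qed
    qed
  qed
  have "measure (model U C) L = measure (model U C) (\<Union>i\<in>{1..C-K+1}. B i)"
    by (rule measure_eq_AE[OF ae Lm UBm])
  also have "\<dots> = (\<Sum>i\<in>{1..C-K+1}. measure (model U C) (B i))"
    using Bm disj by (intro P.finite_measure_finite_Union) auto
  finally show ?thesis unfolding L_def B_def by simp
qed

end
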